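(* Let $V$ be a real symmetric positive definite $2n\times2n$ matrix and let $\nu_{\min}(V)$ be its smallest symplectic eigenvalue. Then $$\nu_{\min}(V)=\max\{\lambda\ge0: V\ge i\lambda\Omega\}=\min\{\mathrm{Tr}(WV): W\ \text{a }2n\times2n\text{ complex Hermitian matrix},\ W\ge0,\ \mathrm{Tr}(W\,i\Omega)=1\}.$$
   Context: $\Omega=\begin{pmatrix}0&\mathbb 1_n\\-\mathbb 1_n&0\end{pmatrix}$. By Williamson's theorem, for every real symmetric positive definite $2n\times2n$ matrix $V$ there is a real matrix $S$ with $S\Omega S^T=\Omega$ (symplectic) such that $SVS^T=D\oplus D$ with $D=\mathrm{diag}(\nu_1(V),\dots,\nu_n(V))$, $\nu_j(V)>0$; the $\nu_j(V)$ are the symplectic eigenvalues of $V$. Matrix inequalities refer to the positive semidefinite (Löwner) order on Hermitian matrices. *)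

theory Defs
  imports "Jordan_Normal_Form.Schur_Decomposition"
begin

definition Omega :: "nat \<Rightarrow> real mat" where
  "Omega n = four_block_mat (0\<^sub>m n n) (1\<^sub>m n) (- 1\<^sub>m n) (0\<^sub>m n n)"

definition real_sym_posdef :: "nat \<Rightarrow> real mat \<Rightarrow> bool" where
  "real_sym_posdef m V \<longleftrightarrow> V \<in> carrier_mat m m \<and> transpose_mat V = V \<and>
     (\<forall>v \<in> carrier_vec m. v \<noteq> 0\<^sub>v m \<longrightarrow> v \<bullet> (V *\<^sub>v v) > 0)"

definition symplectic :: "nat \<Rightarrow> real mat \<Rightarrow> bool" where
  "symplectic n S \<longleftrightarrow> S \<in> carrier_mat (2*n) (2*n) \<and>
     S * Omega n * transpose_mat S = Omega n"

definition diag_of :: "nat \<Rightarrow> (nat \<Rightarrow> real) \<Rightarrow> real mat" where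
  "diag_of n d = mat n n (\<lambda>(i,j). if i = j then d i else 0)"

text \<open>(S, d) is a Williamson normal form of V: S symplectic, S V S^T = D (+) D,
  D = diag(d_1..d_n), all d_j > 0. The d_j are then the symplectic eigenvalues of V.\<close>
definition williamson :: "nat \<Rightarrow> real mat \<Rightarrow> real mat \<Rightarrow> (nat \<Rightarrow> real) \<Rightarrow> bool" where
  "williamson n V S d \<longleftrightarrow> symplectic n S \<and> (\<forall>j<n. d j > 0) \<and>
     S * V * transpose_mat S = four_block_mat (diag_of n d) (0\<^sub>m n n) (0\<^sub>m n n) (diag_of n d)"

definition hermitian :: "nat \<Rightarrow> complex mat \<Rightarrow> bool" where
  "hermitian m A \<longleftrightarrow> A \<in> carrier_mat m m \<and> mat_adjoint A = A"

text \<open>Positive semidefinite (A \<ge> 0 in the Loewner order): Hermitian with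
  nonnegative quadratic form v^* A v (which is real for Hermitian A).\<close>
definition psd :: "nat \<Rightarrow> complex mat \<Rightarrow> bool" where
  "psd m A \<longleftrightarrow> hermitian m A \<and>
     (\<forall>v \<in> carrier_vec m. Re (conjugate v \<bullet> (A *\<^sub>v v)) \<ge> 0)"

definition mtrace :: "'a::comm_ring_1 mat \<Rightarrow> 'a" where
  "mtrace A = (\<Sum>i<dim_row A. A $$ (i,i))"

abbreviation cmat :: "real mat \<Rightarrow> complex mat" where
  "cmat A \<equiv> map_mat complex_of_real A"

end

theory Submission imports Defs begin

definition quad :: "complex mat \<Rightarrow> complex vec \<Rightarrow> complex" where
  "quad X v = conjugate v \<bullet> (X *\<^sub>v v)"

definition outer :: "nat \<Rightarrow> complex vec \<Rightarrow> complex mat" where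
  "outer m u = mat m m (\<lambda>(a,b). u$a * cnj (u$b))"

definition qpos :: "nat \<Rightarrow> complex mat \<Rightarrow> bool" where
  "qpos m W \<longleftrightarrow> W \<in> carrier_mat m m \<and> (\<forall>v\<in>carrier_vec m. Re (quad W v) \<ge> 0)"

lemma adj_carrier: "A \<in> carrier_mat m m \<Longrightarrow> mat_adjoint A \<in> carrier_mat m m"
  by (simp add: mat_adjoint_def mat_of_rows_def)

lemma adj_index: "A \<in> carrier_mat m m \<Longrightarrow> i < m \<Longrightarrow> j < m \<Longrightarrow> mat_adjoint A $$ (i,j) = cnj (A $$ (j,i))"
  by (simp add: mat_adjoint_def mat_of_rows_def)

lemma tr_mult: assumes "A \<in> carrier_mat m m" "B \<in> carrier_mat m m"
  shows "mtrace (A*B) = (\<Sum>i<m. \<Sum>k<m. A$$(i,k) * B$$(k,i))"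
  using assms by (simp add: mtrace_def scalar_prod_def lessThan_atLeast0)

lemma tr_comm: assumes "A \<in> carrier_mat m m" "B \<in> carrier_mat m m"
  shows "mtrace (A*B) = mtrace (B*A)"
  unfolding tr_mult[OF assms] tr_mult[OF assms(2,1)]
  by (subst sum.swap) (simp add: mult.commute)

lemma tr_minus: assumes "A \<in> carrier_mat m m" "B \<in> carrier_mat m m"
  shows "mtrace (A - B) = mtrace A - mtrace B"
  using assms by (simp add: mtrace_def sum_subtractf)

lemma tr_smult: assumes "A \<in> carrier_mat m m" shows "mtrace (c \<cdot>\<^sub>m A) = c * mtrace A"
  using assms by (auto simp: mtrace_def sum_distrib_left intro!: sum.cong)

lemma tr_outer: assumes "u \<in> carrier_vec m" "X \<in> carrier_mat m m"
  shows "mtrace (outer m u * X) = quad X u"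
proof -
  have "mtrace (outer m u * X) = (\<Sum>i<m. \<Sum>k<m. u$i * cnj (u$k) * X$$(k,i))"
    by (subst tr_mult[of _ m], auto simp: outer_def assms)
  also have "\<dots> = (\<Sum>k<m. \<Sum>i<m. cnj (u$k) * (X$$(k,i) * u$i))"
    by (subst sum.swap) (simp add: ac_simps)
  also have "\<dots> = quad X u"
    using assms by (simp add: quad_def scalar_prod_def lessThan_atLeast0 sum_distrib_left)
  finally show ?thesis .
qed

lemma quad_outer: assumes "u \<in> carrier_vec m" "v \<in> carrier_vec m"
  shows "Re (quad (outer m u) v) \<ge> 0"
proof -
  define z where "z = (\<Sum>a<m. cnj (v$a) * u$a)"
  have "quad (outer m u) v = (\<Sum>a<m. \<Sum>b<m. (cnj (v$a) * u$a) * (cnj (u$b) * v$b))"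
    using assms by (simp add: quad_def outer_def scalar_prod_def lessThan_atLeast0 sum_distrib_left ac_simps)
  also have "\<dots> = z * cnj z"
    unfolding z_def sum_product cnj_sum by (simp add: ac_simps)
  finally show ?thesis
    by (simp add: complex_mult_cnj)
qed

lemma conj_cmat: assumes "C \<in> carrier_mat m m" "v \<in> carrier_vec m"
  shows "conjugate (cmat C *\<^sub>v v) = cmat C *\<^sub>v conjugate v"
  using assms by (intro eq_vecI) (auto simp: scalar_prod_def cnj_sum)

lemma quad_cong: assumes C: "C \<in> carrier_mat m m" and X: "X \<in> carrier_mat m m" and v: "v \<in> carrier_vec m"
  shows "quad (cmat (transpose_mat C) * X * cmat C) v = quad X (cmat C *\<^sub>v v)"
proof -
  define w where "w = cmat C *\<^sub>v v"
  define y where "y = X *\<^sub>v w"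
  have w: "w \<in> carrier_vec m" using C v by (simp add: w_def)
  have y: "y \<in> carrier_vec m" using X w by (simp add: y_def)
  have "(cmat (transpose_mat C) * X * cmat C) *\<^sub>v v = cmat (transpose_mat C) *\<^sub>v y"
    using C X v by (simp add: y_def w_def assoc_mult_mat_vec[of _ m m _ m])
  hence "quad (cmat (transpose_mat C) * X * cmat C) v = conjugate v \<bullet> (cmat (transpose_mat C) *\<^sub>v y)"
    by (simp add: quad_def)
  also have "\<dots> = (transpose_mat (cmat C) *\<^sub>v y) \<bullet> conjugate v"
    using C y v by (subst comm_scalar_prod[of _ m]) (auto simp: map_mat_transpose)
  also have "\<dots> = y \<bullet> (cmat C *\<^sub>v conjugate v)"
    using C y v by (subst transpose_vec_mult_scalar[of _ m m]) auto
  also have "\<dots> = y \<bullet> conjugate w" using conj_cmat[OF C v] by (simp add: w_def)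
  also have "\<dots> = conjugate w \<bullet> y" using y w by (subst comm_scalar_prod[of _ m]) auto
  finally show ?thesis by (simp add: quad_def y_def w_def)
qed

lemma quad_minus: assumes "X \<in> carrier_mat m m" "Y \<in> carrier_mat m m" "v \<in> carrier_vec m"
  shows "quad (X - c \<cdot>\<^sub>m Y) v = quad X v - c * quad Y v"
proof -
  have "quad (X - c \<cdot>\<^sub>m Y) v = mtrace (outer m v * (X - c \<cdot>\<^sub>m Y))"
  proof -
    have "X - c \<cdot>\<^sub>m Y \<in> carrier_mat m m" using assms by auto
    thus ?thesis using tr_outer[OF assms(3), of "X - c \<cdot>\<^sub>m Y"] by simp
  qed
  also have "outer m v * (X - c \<cdot>\<^sub>m Y) = outer m v * X - c \<cdot>\<^sub>m (outer m v * Y)"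
    using assms by (subst mult_minus_distrib_mat[of _ m m _ m]) (auto simp: outer_def mult_smult_distrib[of _ m m _ m])
  also have "mtrace \<dots> = mtrace (outer m v * X) - c * mtrace (outer m v * Y)"
    using assms by (subst tr_minus[of _ m]) (auto simp: outer_def intro!: tr_smult[of _ m])
  finally show ?thesis using assms by (simp add: tr_outer)
qed

lemma tr_cong: assumes "W \<in> carrier_mat m m" "C \<in> carrier_mat m m" "Y \<in> carrier_mat m m" "D \<in> carrier_mat m m"
  shows "mtrace (W * (C * Y * D)) = mtrace ((D * W * C) * Y)"
proof -
  have "W * (C * Y * D) = (W * C * Y) * D" using assms by (simp add: assoc_mult_mat[of _ m m _ m _ m])
  hence "mtrace (W * (C * Y * D)) = mtrace (D * (W * C * Y))"
    using assms by (simp add: tr_comm[of _ m])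
  also have "D * (W * C * Y) = (D * W * C) * Y" using assms by (simp add: assoc_mult_mat[of _ m m _ m _ m])
  finally show ?thesis .
qed

lemma Om_carrier: "Omega n \<in> carrier_mat (2*n) (2*n)"
  by (simp add: Omega_def mult_2)

lemma Om_ent: assumes "i < 2*n" "j < 2*n"
  shows "Omega n $$ (i,j) = (if i < n then (if j = i+n then 1 else 0) else (if j = i-n then -1 else 0))"
  using assms by (auto simp: Omega_def)

definition EE :: "nat \<Rightarrow> (nat \<Rightarrow> real) \<Rightarrow> real mat" where
  "EE n d = four_block_mat (diag_of n d) (0\<^sub>m n n) (0\<^sub>m n n) (diag_of n d)"

lemma EE_carrier: "EE n d \<in> carrier_mat (2*n) (2*n)"
  by (simp add: EE_def diag_of_def mult_2)

lemma EE_ent: assumes "i < 2*n" "j < 2*n"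
  shows "EE n d $$ (i,j) = (if i = j then d (if i < n then i else i-n) else 0)"
  using assms by (auto simp: EE_def diag_of_def)

lemma sum_split2: fixes f :: "nat \<Rightarrow> 'a::comm_monoid_add" shows "(\<Sum>i<2*n. f i) = (\<Sum>j<n. f j) + (\<Sum>j<n. f (j+n))"
proof -
  have e: "{..<2*n} = {..<n} \<union> {0+n..<n+n}" by auto
  have "(\<Sum>i<2*n. f i) = (\<Sum>j<n. f j) + (\<Sum>j\<in>{0+n..<n+n}. f j)"
    unfolding e by (rule sum.union_disjoint) auto
  also have "(\<Sum>j\<in>{0+n..<n+n}. f j) = (\<Sum>j\<in>{0..<n}. f (j+n))" by (rule sum.shift_bounds_nat_ivl)
  finally show ?thesis by (simp add: lessThan_atLeast0)
qed

lemma sum_two: fixes f :: "nat \<Rightarrow> complex" assumes "finite A" "a \<in> A" "b \<in> A" "a \<noteq> b"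
  shows "(\<Sum>l\<in>A. f l * (if l = a then p else if l = b then q else 0)) = f a * p + f b * q"
proof -
  have "(\<Sum>l\<in>A. f l * (if l = a then p else if l = b then q else 0)) =
        (\<Sum>l\<in>A. (if l = a then f a * p else 0) + (if l = b then f b * q else 0))"
    using assms by (intro sum.cong) auto
  also have "\<dots> = f a * p + f b * q" using assms by (simp add: sum.distrib)
  finally show ?thesis .
qed

lemma quad2: assumes X: "X \<in> carrier_mat m m" and ab: "a < m" "b < m" "a \<noteq> b"
  shows "quad X (vec m (\<lambda>k. if k = a then 1 else if k = b then c else 0)) =
     X$$(a,a) + c * X$$(a,b) + cnj c * X$$(b,a) + cnj c * c * X$$(b,b)"
proof -
  let ?v = "vec m (\<lambda>k. if k = a then 1 else if k = b then c else 0)"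
  have Xv: "(X *\<^sub>v ?v) $ k = X$$(k,a) + X$$(k,b) * c" if "k < m" for k
  proof -
    have "(X *\<^sub>v ?v) $ k = (\<Sum>l\<in>{0..<m}. X$$(k,l) * (if l = a then 1 else if l = b then c else 0))"
      using X that by (simp add: scalar_prod_def)
    also have "\<dots> = X$$(k,a) + X$$(k,b) * c" using ab by (subst sum_two) auto
    finally show ?thesis .
  qed
  have "quad X ?v = (\<Sum>k\<in>{0..<m}. (X$$(k,a) + X$$(k,b) * c) * (if k = a then 1 else if k = b then cnj c else 0))"
    using X Xv by (auto simp: quad_def scalar_prod_def mult.commute intro!: sum.cong)
  also have "\<dots> = (X$$(a,a) + X$$(a,b) * c) * 1 + (X$$(b,a) + X$$(b,b) * c) * cnj c"
    using ab by (subst sum_two) auto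
  finally show ?thesis by (simp add: algebra_simps)
qed

lemma key: assumes W: "qpos (2*n) W" and nu: "0 \<le> nu" "\<forall>j<n. nu \<le> d j"
  shows "nu * Re (\<i> * mtrace (W * cmat (Omega n))) \<le> Re (mtrace (W * cmat (EE n d)))"
proof -
  have Wc: "W \<in> carrier_mat (2*n) (2*n)" using W by (simp add: qpos_def)
  have g1: "(\<Sum>k<2*n. W$$(i,k) * complex_of_real (EE n d $$ (k,i))) = W$$(i,i) * complex_of_real (d (if i < n then i else i-n))"
    if i: "i < 2*n" for i
  proof -
    have "(\<Sum>k<2*n. W$$(i,k) * complex_of_real (EE n d $$ (k,i))) =
          (\<Sum>k<2*n. if k = i then W$$(i,i) * complex_of_real (d (if i < n then i else i-n)) else 0)"
      using i by (intro sum.cong) (auto simp: EE_ent)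
    also have "\<dots> = W$$(i,i) * complex_of_real (d (if i < n then i else i-n))" using i by simp
    finally show ?thesis .
  qed
  have "mtrace (W * cmat (EE n d)) = (\<Sum>i<2*n. \<Sum>k<2*n. W$$(i,k) * complex_of_real (EE n d $$ (k,i)))"
    using Wc EE_carrier[of n d] by (subst tr_mult[of _ "2*n"]) auto
  also have "\<dots> = (\<Sum>i<2*n. W$$(i,i) * complex_of_real (d (if i < n then i else i-n)))"
    using g1 by (intro sum.cong) auto
  also have "\<dots> = (\<Sum>j<n. complex_of_real (d j) * (W$$(j,j) + W$$(j+n,j+n)))"
    by (subst sum_split2, subst sum.distrib[symmetric], intro sum.cong) (auto simp: algebra_simps)
  finally have trE: "mtrace (W * cmat (EE n d)) = (\<Sum>j<n. complex_of_real (d j) * (W$$(j,j) + W$$(j+n,j+n)))" .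
  have g2: "(\<Sum>k<2*n. W$$(i,k) * complex_of_real (Omega n $$ (k,i))) = - W$$(i,i+n)" if i: "i < n" for i
  proof -
    have "(\<Sum>k<2*n. W$$(i,k) * complex_of_real (Omega n $$ (k,i))) =
          (\<Sum>k<2*n. if k = i+n then - W$$(i,i+n) else 0)"
      using i by (intro sum.cong) (auto simp: Om_ent)
    also have "\<dots> = - W$$(i,i+n)" using i by simp
    finally show ?thesis .
  qed
  have g3: "(\<Sum>k<2*n. W$$(i+n,k) * complex_of_real (Omega n $$ (k,i+n))) = W$$(i+n,i)" if i: "i < n" for i
  proof -
    have "(\<Sum>k<2*n. W$$(i+n,k) * complex_of_real (Omega n $$ (k,i+n))) =
          (\<Sum>k<2*n. if k = i then W$$(i+n,i) else 0)"
      using i by (intro sum.cong) (auto simp: Om_ent)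
    also have "\<dots> = W$$(i+n,i)" using i by simp
    finally show ?thesis .
  qed
  have "mtrace (W * cmat (Omega n)) = (\<Sum>i<2*n. \<Sum>k<2*n. W$$(i,k) * complex_of_real (Omega n $$ (k,i)))"
    using Wc Om_carrier[of n] by (subst tr_mult[of _ "2*n"]) auto
  also have "\<dots> = (\<Sum>j<n. - W$$(j,j+n)) + (\<Sum>j<n. W$$(j+n,j))"
    by (subst sum_split2, intro arg_cong2[where f="(+)"] sum.cong) (auto simp: g2 g3)
  also have "\<dots> = (\<Sum>j<n. W$$(j+n,j) - W$$(j,j+n))"
    by (simp add: sum_subtractf sum_negf)
  finally have trO: "mtrace (W * cmat (Omega n)) = (\<Sum>j<n. W$$(j+n,j) - W$$(j,j+n))" .
  define p where "p j = Re (W$$(j,j) + W$$(j+n,j+n))" for j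
  define t where "t j = Re (\<i> * (W$$(j+n,j) - W$$(j,j+n)))" for j
  have pt: "t j \<le> p j \<and> 0 \<le> p j" if j: "j < n" for j
  proof -
    have a: "j < 2*n" "j+n < 2*n" "j \<noteq> j+n" using j \<open>j<n\<close> by auto
    have q1: "0 \<le> Re (quad W (vec (2*n) (\<lambda>k. if k = j then 1 else if k = j+n then \<i> else 0)))"
      using W by (auto simp: qpos_def)
    have q2: "0 \<le> Re (quad W (vec (2*n) (\<lambda>k. if k = j then 1 else if k = j+n then -\<i> else 0)))"
      using W by (auto simp: qpos_def)
    note q1 = q1[unfolded quad2[OF Wc a]]
    note q2 = q2[unfolded quad2[OF Wc a]]
    have "t j \<le> p j" using q1 by (simp add: p_def t_def algebra_simps)
    moreover have "- t j \<le> p j" using q2 by (simp add: p_def t_def algebra_simps)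
    ultimately show ?thesis by simp
  qed
  have "Re (\<i> * mtrace (W * cmat (Omega n))) = (\<Sum>j<n. t j)"
    by (simp add: trO t_def sum_distrib_left Re_sum)
  moreover have "Re (mtrace (W * cmat (EE n d))) = (\<Sum>j<n. d j * p j)"
    by (simp add: trE p_def Re_sum)
  moreover have "nu * (\<Sum>j<n. t j) \<le> (\<Sum>j<n. d j * p j)"
    unfolding sum_distrib_left
  proof (rule sum_mono)
    fix j assume "j \<in> {..<n}"
    hence j: "j < n" by simp
    have "nu * t j \<le> nu * p j" using pt[OF j] nu by (simp add: mult_left_mono)
    also have "\<dots> \<le> d j * p j" using pt[OF j] nu j by (simp add: mult_right_mono)
    finally show "nu * t j \<le> d j * p j" .
  qed
  ultimately show ?thesis by simp
qed

lemma Om2: "Omega n * Omega n = (-1) \<cdot>\<^sub>m 1\<^sub>m (2*n)"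
proof (rule eq_matI)
  fix i j assume i: "i < dim_row ((-1) \<cdot>\<^sub>m 1\<^sub>m (2*n) :: real mat)" and j: "j < dim_col ((-1) \<cdot>\<^sub>m 1\<^sub>m (2*n) :: real mat)"
  hence i: "i < 2*n" and j: "j < 2*n" by auto
  have "(Omega n * Omega n) $$ (i,j) = (\<Sum>k\<in>{0..<2*n}. Omega n $$ (i,k) * Omega n $$ (k,j))"
    using i j Om_carrier[of n] by (simp add: scalar_prod_def)
  also have "\<dots> = (if i = j then -1 else 0)"
  proof (cases "i < n")
    case True
    have "(\<Sum>k\<in>{0..<2*n}. Omega n $$ (i,k) * Omega n $$ (k,j)) = (\<Sum>k\<in>{0..<2*n}. if k = i+n then Omega n $$ (i+n,j) else 0)"
      using True i j by (intro sum.cong) (auto simp: Om_ent)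
    also have "\<dots> = Omega n $$ (i+n,j)" using True by simp
    finally show ?thesis using True j by (simp add: Om_ent)
  next
    case False
    have "(\<Sum>k\<in>{0..<2*n}. Omega n $$ (i,k) * Omega n $$ (k,j)) = (\<Sum>k\<in>{0..<2*n}. if k = i-n then - Omega n $$ (i-n,j) else 0)"
      using False i j by (intro sum.cong) (auto simp: Om_ent)
    also have "\<dots> = - Omega n $$ (i-n,j)" using False i by simp
    finally show ?thesis using False i j by (auto simp: Om_ent)
  qed
  finally show "(Omega n * Omega n) $$ (i,j) = ((-1) \<cdot>\<^sub>m 1\<^sub>m (2*n)) $$ (i,j)" using i j by simp
qed (auto simp: Omega_def mult_2)

lemma conj_back: fixes A A' B B' Y :: "real mat" assumes "A \<in> carrier_mat m m" "A' \<in> carrier_mat m m" "B \<in> carrier_mat m m" "B' \<in> carrier_mat m m"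
  "Y \<in> carrier_mat m m" "A' * A = 1\<^sub>m m" "B * B' = 1\<^sub>m m"
  shows "A' * (A * Y * B) * B' = Y"
proof -
  have c: "A * Y \<in> carrier_mat m m" "A * Y * B \<in> carrier_mat m m" using assms by auto
  have "A' * (A * Y * B) * B' = A' * ((A * Y * B) * B')"
    using assms c by (rule_tac assoc_mult_mat) auto
  also have "(A * Y * B) * B' = (A * Y) * (B * B')"
    using assms c by (rule_tac assoc_mult_mat) auto
  also have "\<dots> = A * Y" by (simp add: assms(7) right_mult_one_mat[OF c(1)])
  also have "A' * (A * Y) = (A' * A) * Y"
    using assms c by (rule_tac assoc_mult_mat[symmetric]) auto
  finally show ?thesis using assms by simp
qed

lemma quad_smult: assumes "A \<in> carrier_mat m m" "v \<in> carrier_vec m"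
  shows "quad (c \<cdot>\<^sub>m A) v = c * quad A v"
proof -
  have "quad (c \<cdot>\<^sub>m A) v = mtrace (outer m v * (c \<cdot>\<^sub>m A))"
    using assms tr_outer[OF assms(2), of "c \<cdot>\<^sub>m A"] by simp
  also have "\<dots> = c * mtrace (outer m v * A)"
    using assms by (subst mult_smult_distrib[of _ m m _ m]) (auto simp: outer_def intro!: tr_smult[of _ m])
  finally show ?thesis using assms by (simp add: tr_outer)
qed

theorem propositionA6:
  fixes n :: nat and V S :: "real mat" and d :: "nat \<Rightarrow> real"
  assumes "n > 0"
    and "real_sym_posdef (2*n) V"
    and "williamson n V S d"
  shows "(let nu = Min (d ` {..<n});
              A = {l::real. l \<ge> 0 \<and>
                     psd (2*n) (cmat V - (\<i> * complex_of_real l) \<cdot>\<^sub>m cmat (Omega n))};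
              B = {x::real. \<exists>W. psd (2*n) W \<and>
                     mtrace (W * (\<i> \<cdot>\<^sub>m cmat (Omega n))) = 1 \<and>
                     mtrace (W * cmat V) = complex_of_real x}
          in (nu \<in> A \<and> (\<forall>l\<in>A. l \<le> nu)) \<and> (nu \<in> B \<and> (\<forall>x\<in>B. nu \<le> x)))"
proof -
  let ?m = "2*n"
  let ?Om = "Omega n"
  have Sc: "S \<in> carrier_mat ?m ?m" and SOm: "S * ?Om * transpose_mat S = ?Om"
    and dpos: "\<forall>j<n. d j > 0" and SVE: "S * V * transpose_mat S = EE n d"
    using assms(3) by (auto simp: williamson_def symplectic_def EE_def)
  have Vc: "V \<in> carrier_mat ?m ?m" and Vsym: "transpose_mat V = V"
    using assms(2) by (auto simp: real_sym_posdef_def)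
  have Omc: "?Om \<in> carrier_mat ?m ?m" by (rule Om_carrier)
  have Ec: "EE n d \<in> carrier_mat ?m ?m" by (rule EE_carrier)
  have STc: "transpose_mat S \<in> carrier_mat ?m ?m" using Sc by auto
  define R0 where "R0 = ?Om * transpose_mat S * ?Om"
  define R where "R = (-1) \<cdot>\<^sub>m R0"
  have R0c: "R0 \<in> carrier_mat ?m ?m" using Sc Omc by (auto simp: R0_def)
  have Rc: "R \<in> carrier_mat ?m ?m" using R0c by (simp add: R_def)
  have "S * R0 = (S * ?Om * transpose_mat S) * ?Om"
    using Sc Omc STc by (simp add: R0_def assoc_mult_mat[of _ ?m ?m _ ?m _ ?m])
  also have "\<dots> = (-1) \<cdot>\<^sub>m 1\<^sub>m ?m" by (simp add: SOm Om2)
  finally have SR0: "S * R0 = (-1) \<cdot>\<^sub>m 1\<^sub>m ?m" .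
  have SR: "S * R = 1\<^sub>m ?m"
    unfolding R_def using Sc R0c SR0 by (subst mult_smult_distrib[of _ ?m ?m _ ?m]) (auto intro!: eq_matI)
  have RS: "R * S = 1\<^sub>m ?m" using mat_mult_left_right_inverse[OF Sc Rc SR] .
  have STRT: "transpose_mat S * transpose_mat R = 1\<^sub>m ?m"
    using RS Sc Rc by (metis transpose_mult transpose_one)
  have RTc: "transpose_mat R \<in> carrier_mat ?m ?m" using Rc by auto
  have VR: "R * EE n d * transpose_mat R = V"
    using conj_back[OF Sc Rc STc RTc Vc RS STRT] SVE by simp
  have OmR: "R * ?Om * transpose_mat R = ?Om"
    using conj_back[OF Sc Rc STc RTc Omc RS STRT] SOm by simp
  define nu where "nu = Min (d ` {..<n})"
  have fin: "finite (d ` {..<n})" "d ` {..<n} \<noteq> {}" using assms(1) by auto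
  have nule: "\<forall>j<n. nu \<le> d j" using fin by (auto simp: nu_def)
  obtain j0 where j0: "j0 < n" "d j0 = nu" using Min_in[OF fin] by (auto simp: nu_def)
  have nupos: "nu > 0" using dpos j0 by auto
  have cV: "cmat V = cmat R * cmat (EE n d) * cmat (transpose_mat R)"
    using VR Rc Ec RTc by (metis mult_carrier_mat of_real_hom.mat_hom_mult)
  have cOm: "cmat ?Om = cmat R * cmat ?Om * cmat (transpose_mat R)"
    using OmR Rc Omc RTc by (metis mult_carrier_mat of_real_hom.mat_hom_mult)
  have red: "nu * Re (\<i> * mtrace (W * cmat ?Om)) \<le> Re (mtrace (W * cmat V))" if W: "qpos ?m W" for W
  proof -
    have Wc: "W \<in> carrier_mat ?m ?m" using W by (simp add: qpos_def)
    define W' where "W' = cmat (transpose_mat R) * W * cmat R"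
    have t1: "mtrace (W * cmat V) = mtrace (W' * cmat (EE n d))"
      unfolding W'_def cV using Wc Rc Ec RTc by (intro tr_cong) auto
    have t2: "mtrace (W * cmat ?Om) = mtrace (W' * cmat ?Om)"
      unfolding W'_def by (subst cOm) (use Wc Rc Omc RTc in \<open>intro tr_cong; auto\<close>)
    have "qpos ?m W'"
      unfolding qpos_def
    proof (intro conjI ballI)
      show "W' \<in> carrier_mat ?m ?m" using Wc Rc by (auto simp: W'_def)
      fix v :: "complex vec" assume v: "v \<in> carrier_vec ?m"
      have "quad W' v = quad W (cmat R *\<^sub>v v)" unfolding W'_def by (rule quad_cong[OF Rc Wc v])
      moreover have "cmat R *\<^sub>v v \<in> carrier_vec ?m" using Rc v by auto
      ultimately show "0 \<le> Re (quad W' v)" using W by (auto simp: qpos_def)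
    qed
    from key[OF this, of nu d] nupos nule show ?thesis by (simp add: t1 t2)
  qed
  define w :: "complex vec" where "w = vec ?m (\<lambda>k. if k = j0 then 1 else if k = j0+n then -\<i> else 0)"
  define u where "u = cmat (transpose_mat S) *\<^sub>v w"
  have wc: "w \<in> carrier_vec ?m" by (simp add: w_def)
  have uc: "u \<in> carrier_vec ?m" using STc wc by (simp add: u_def)
  have ab: "j0 < ?m" "j0+n < ?m" "j0 \<noteq> j0+n" using j0 assms(1) by auto
  have quS: "quad X u = quad (cmat S * X * cmat (transpose_mat S)) w" if "X \<in> carrier_mat ?m ?m" for X
    using quad_cong[OF STc that wc] by (simp add: u_def)
  have cE: "cmat S * cmat V * cmat (transpose_mat S) = cmat (EE n d)"
    using SVE Sc Vc STc by (metis mult_carrier_mat of_real_hom.mat_hom_mult)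
  have cO: "cmat S * cmat ?Om * cmat (transpose_mat S) = cmat ?Om"
    using SOm Sc Omc STc by (metis mult_carrier_mat of_real_hom.mat_hom_mult)
  have qV: "quad (cmat V) u = 2 * complex_of_real nu"
  proof -
    have "quad (cmat V) u = quad (cmat (EE n d)) w" using quS[of "cmat V"] Vc cE by simp
    also have "\<dots> = 2 * complex_of_real nu"
      unfolding w_def using Ec ab j0 by (subst quad2) (auto simp: EE_ent)
    finally show ?thesis .
  qed
  have qO: "quad (cmat ?Om) u = - 2 * \<i>"
  proof -
    have "quad (cmat ?Om) u = quad (cmat ?Om) w" using quS[of "cmat ?Om"] Omc cO by simp
    also have "\<dots> = - 2 * \<i>"
      unfolding w_def using Omc ab j0 by (subst quad2) (auto simp: Om_ent)
    finally show ?thesis .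
  qed
  define A where "A = {l::real. l \<ge> 0 \<and>
                     psd (2*n) (cmat V - (\<i> * complex_of_real l) \<cdot>\<^sub>m cmat (Omega n))}"
  define B where "B = {x::real. \<exists>W. psd (2*n) W \<and>
                     mtrace (W * (\<i> \<cdot>\<^sub>m cmat (Omega n))) = 1 \<and>
                     mtrace (W * cmat V) = complex_of_real x}"
  have cVc: "cmat V \<in> carrier_mat ?m ?m" and cOmc: "cmat ?Om \<in> carrier_mat ?m ?m" using Vc Omc by auto
  have P1: "nu \<in> A"
  proof -
    let ?M = "cmat V - (\<i> * complex_of_real nu) \<cdot>\<^sub>m cmat ?Om"
    have Mc: "?M \<in> carrier_mat ?m ?m" using cVc cOmc by auto
    have "mat_adjoint ?M = ?M"
    proof (rule eq_matI)
      fix i j assume "i < dim_row ?M" "j < dim_col ?M"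
      hence i: "i < ?m" and j: "j < ?m" using Mc by auto
      have vs: "V $$ (j,i) = V $$ (i,j)" using Vsym i j Vc
        by (metis carrier_matD(1) carrier_matD(2) index_transpose_mat(1))
      have os: "?Om $$ (j,i) = - ?Om $$ (i,j)" using i j by (auto simp: Om_ent)
      show "mat_adjoint ?M $$ (i,j) = ?M $$ (i,j)"
        using i j Vc Omc by (simp add: adj_index[OF Mc i j] vs os)
    qed (use Mc adj_carrier[OF Mc] in auto)
    moreover have "0 \<le> Re (conjugate v \<bullet> (?M *\<^sub>v v))" if v: "v \<in> carrier_vec ?m" for v
    proof -
      have q: "qpos ?m (outer ?m v)" unfolding qpos_def using quad_outer[OF v] v
        by (auto simp: outer_def)
      have "conjugate v \<bullet> (?M *\<^sub>v v) = quad (cmat V) v - (\<i> * complex_of_real nu) * quad (cmat ?Om) v"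
        using quad_minus[OF cVc cOmc v] by (simp add: quad_def)
      moreover have "nu * Re (\<i> * quad (cmat ?Om) v) \<le> Re (quad (cmat V) v)"
        using red[OF q] by (simp add: tr_outer[OF v cOmc] tr_outer[OF v cVc])
      ultimately show ?thesis by simp
    qed
    ultimately show ?thesis using nupos Mc by (auto simp: A_def psd_def hermitian_def)
  qed
  have P2: "\<forall>l\<in>A. l \<le> nu"
  proof (intro ballI, rule ccontr)
    fix l assume "l \<in> A" and ln: "\<not> l \<le> nu"
    hence ps: "psd ?m (cmat V - (\<i> * complex_of_real l) \<cdot>\<^sub>m cmat ?Om)" by (simp add: A_def)
    have "conjugate u \<bullet> ((cmat V - (\<i> * complex_of_real l) \<cdot>\<^sub>m cmat ?Om) *\<^sub>v u)
          = quad (cmat V) u - (\<i> * complex_of_real l) * quad (cmat ?Om) u"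
      using quad_minus[OF cVc cOmc uc] by (simp add: quad_def)
    also have "\<dots> = 2 * complex_of_real nu - 2 * complex_of_real l" by (simp add: qV qO algebra_simps)
    finally have "Re (conjugate u \<bullet> ((cmat V - (\<i> * complex_of_real l) \<cdot>\<^sub>m cmat ?Om) *\<^sub>v u)) < 0"
      using ln by simp
    thus False using ps uc by (auto simp: psd_def)
  qed
  have P3: "nu \<in> B"
  proof -
    define W where "W = (1/2 :: complex) \<cdot>\<^sub>m outer ?m u"
    have oc: "outer ?m u \<in> carrier_mat ?m ?m" by (simp add: outer_def)
    have Wc: "W \<in> carrier_mat ?m ?m" by (simp add: W_def outer_def)
    have "mat_adjoint W = W"
    proof (rule eq_matI)
      fix i j assume "i < dim_row W" "j < dim_col W"
      hence i: "i < ?m" and j: "j < ?m" using Wc by auto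
      show "mat_adjoint W $$ (i,j) = W $$ (i,j)"
        unfolding adj_index[OF Wc i j] using i j by (simp add: W_def outer_def)
    qed (use Wc adj_carrier[OF Wc] in auto)
    moreover have "0 \<le> Re (conjugate v \<bullet> (W *\<^sub>v v))" if v: "v \<in> carrier_vec ?m" for v
    proof -
      have "Re (conjugate v \<bullet> (W *\<^sub>v v)) = Re (quad W v)" by (simp add: quad_def)
      also have "quad W v = (1/2) * quad (outer ?m u) v" unfolding W_def by (rule quad_smult[OF oc v])
      finally show ?thesis using quad_outer[OF uc v] by simp
    qed
    ultimately have "psd ?m W" using Wc by (auto simp: psd_def hermitian_def)
    moreover have "mtrace (W * (\<i> \<cdot>\<^sub>m cmat ?Om)) = 1"
    proof -
      have "W * (\<i> \<cdot>\<^sub>m cmat ?Om) = \<i> \<cdot>\<^sub>m ((1/2) \<cdot>\<^sub>m (outer ?m u * cmat ?Om))"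
        using oc cOmc unfolding W_def
        by (simp add: mult_smult_distrib[of _ ?m ?m _ ?m] mult_smult_assoc_mat[of _ ?m ?m _ ?m])
      hence "mtrace (W * (\<i> \<cdot>\<^sub>m cmat ?Om)) = \<i> * ((1/2) * quad (cmat ?Om) u)"
        using oc cOmc by (simp add: tr_smult[of _ ?m] tr_outer[OF uc cOmc])
      thus ?thesis by (simp add: qO)
    qed
    moreover have "mtrace (W * cmat V) = complex_of_real nu"
    proof -
      have "W * cmat V = (1/2) \<cdot>\<^sub>m (outer ?m u * cmat V)"
        using oc cVc unfolding W_def by (simp add: mult_smult_assoc_mat[of _ ?m ?m _ ?m])
      hence "mtrace (W * cmat V) = (1/2) * quad (cmat V) u"
        using oc cVc by (simp add: tr_smult[of _ ?m] tr_outer[OF uc cVc])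
      thus ?thesis by (simp add: qV)
    qed
    ultimately show ?thesis by (auto simp: B_def)
  qed
  have P4: "\<forall>x\<in>B. nu \<le> x"
  proof
    fix x assume "x \<in> B"
    then obtain W where W: "psd ?m W" "mtrace (W * (\<i> \<cdot>\<^sub>m cmat ?Om)) = 1"
      "mtrace (W * cmat V) = complex_of_real x" by (auto simp: B_def)
    have Wc: "W \<in> carrier_mat ?m ?m" using W by (simp add: psd_def hermitian_def)
    have q: "qpos ?m W" using W by (simp add: qpos_def psd_def hermitian_def quad_def)
    have "mtrace (W * (\<i> \<cdot>\<^sub>m cmat ?Om)) = \<i> * mtrace (W * cmat ?Om)"
      using Wc cOmc by (simp add: mult_smult_distrib[of _ ?m ?m _ ?m] tr_smult[of _ ?m])
    hence "Re (\<i> * mtrace (W * cmat ?Om)) = 1" using W by simp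
    thus "nu \<le> x" using red[OF q] W by simp
  qed
  show ?thesis using P1 P2 P3 P4 unfolding Let_def A_def B_def nu_def by blast
qed

end
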